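(* Let $p$ be a prime, $n>1$, $\alpha_0,\dots,\alpha_{n-1}\in\mathbb{L}_p$, and let $A\in\mathbb{L}_p^{n\times n}$ be the matrix whose transpose $A^T$ is the companion matrix of $-\alpha_0-\alpha_1t-\dots-\alpha_{n-1}t^{n-1}+t^n$. Then the linear cellular automaton over $(\mathbb{Z}/p\mathbb{Z})^n$ with associated matrix $A$ is positively expansive if and only if the linear cellular automaton over $(\mathbb{Z}/p\mathbb{Z})^n$ with associated matrix $A^T$ is positively expansive.
   Context: $\mathbb{L}_p=\mathbb{Z}/p\mathbb{Z}[X,X^{-1}]$. The companion matrix of a monic polynomial $\beta_0+\dots+\beta_{n-1}t^{n-1}+t^n$ is the $n\times n$ matrix with ones on the subdiagonal, last column $(-\beta_0,\dots,-\beta_{n-1})^T$, and zeros elsewhere. The linear cellular automaton over $(\mathbb{Z}/p\mathbb{Z})^n$ with associated matrix $\sum_{j=-r}^rA_jX^{-j}$ ($A_j\in(\mathbb{Z}/p\mathbb{Z})^{n\times n}$) is the map $\mathcal{F}(c)_i=\sum_{j=-r}^rA_jc_{i+j}$ on $((\mathbb{Z}/p\mathbb{Z})^n)^{\mathbb{Z}}$ with metric $d(c,c')=2^{-\min\{|j|:c_j\neq c'_j\}}$ ($d(c,c)=0$); it is positively expansive if there is $\varepsilon>0$ such that for all $c\neq c'$ some $\ell\in\mathbb{N}$ gives $d(\mathcal{F}^\ell(c),\mathcal{F}^\ell(c'))\geq\varepsilon$. *)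

theory Defs
  imports Complex_Main "HOL-Computational_Algebra.Primes"
begin

text \<open>Elements of L_p = Z/pZ[X,X^-1] are represented as coefficient functions
  a :: int => int (a m = coefficient of X^m), with values in {0..<p} and finite support.\<close>

type_synonym laurent = "int \<Rightarrow> int"

definition laurent_poly :: "int \<Rightarrow> laurent \<Rightarrow> bool" where
  "laurent_poly p a \<longleftrightarrow> (\<forall>m. 0 \<le> a m \<and> a m < p) \<and> finite {m. a m \<noteq> 0}"

definition lp_zero :: laurent where "lp_zero = (\<lambda>m. 0)"
definition lp_one :: laurent where "lp_one = (\<lambda>m. if m = 0 then 1 else 0)"
definition lp_neg :: "int \<Rightarrow> laurent \<Rightarrow> laurent" where
  "lp_neg p a = (\<lambda>m. (- a m) mod p)"

text \<open>Companion matrix (n x n, indices 0..n-1) of the monic polynomial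
  beta_0 + ... + beta_{n-1} t^{n-1} + t^n: ones on the subdiagonal,
  last column (-beta_0, ..., -beta_{n-1})^T, zeros elsewhere.\<close>

definition companion :: "int \<Rightarrow> nat \<Rightarrow> (nat \<Rightarrow> laurent) \<Rightarrow> nat \<Rightarrow> nat \<Rightarrow> laurent" where
  "companion p n \<beta> k l =
     (if l = n - 1 then lp_neg p (\<beta> k) else if k = l + 1 then lp_one else lp_zero)"

text \<open>Configurations in ((Z/pZ)^n)^Z: c i k is the k-th component (k < n) of cell i.\<close>

definition config :: "int \<Rightarrow> nat \<Rightarrow> (int \<Rightarrow> nat \<Rightarrow> int) \<Rightarrow> bool" where
  "config p n c \<longleftrightarrow> (\<forall>i k. (k < n \<longrightarrow> 0 \<le> c i k \<and> c i k < p) \<and> (n \<le> k \<longrightarrow> c i k = 0))"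

text \<open>The linear CA with associated matrix M = sum_j A_j X^(-j), i.e. (A_j)_{k,l} is the
  coefficient of X^(-j) in M k l:  F(c)_i = sum_j A_j c_(i+j).\<close>

definition lca :: "int \<Rightarrow> nat \<Rightarrow> (nat \<Rightarrow> nat \<Rightarrow> laurent) \<Rightarrow> (int \<Rightarrow> nat \<Rightarrow> int) \<Rightarrow> (int \<Rightarrow> nat \<Rightarrow> int)" where
  "lca p n M c = (\<lambda>i k. if k < n then
      (\<Sum>l<n. \<Sum>j\<in>{j. M k l (- j) \<noteq> 0}. M k l (- j) * c (i + j) l) mod p else 0)"

definition cdist :: "(int \<Rightarrow> nat \<Rightarrow> int) \<Rightarrow> (int \<Rightarrow> nat \<Rightarrow> int) \<Rightarrow> real" where
  "cdist c c' = (if c = c' then 0 else (1/2) ^ (LEAST m. \<exists>j. nat \<bar>j\<bar> = m \<and> c j \<noteq> c' j))"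

definition pos_expansive :: "int \<Rightarrow> nat \<Rightarrow> (nat \<Rightarrow> nat \<Rightarrow> laurent) \<Rightarrow> bool" where
  "pos_expansive p n M \<longleftrightarrow> (\<exists>\<epsilon>>0. \<forall>c c'. config p n c \<and> config p n c' \<and> c \<noteq> c' \<longrightarrow>
      (\<exists>t::nat. cdist ((lca p n M ^^ t) c) ((lca p n M ^^ t) c') \<ge> \<epsilon>))"

end

theory Submission
  imports Defs
begin

definition agree :: "nat \<Rightarrow> (int \<Rightarrow> 'a) \<Rightarrow> (int \<Rightarrow> 'a) \<Rightarrow> bool" where
  "agree m x y \<longleftrightarrow> (\<forall>j. \<bar>j\<bar> \<le> int m \<longrightarrow> x j = y j)"

lemma agree_mono: "agree m x y \<Longrightarrow> m' \<le> m \<Longrightarrow> agree m' x y"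
  unfolding agree_def by force

lemma cdist_ge:
  assumes "\<bar>j\<bar> \<le> int m" "c j \<noteq> c' j"
  shows "cdist c c' \<ge> (1/2)^m"
proof -
  have ne: "c \<noteq> c'" using assms by auto
  have "(LEAST m. \<exists>j. nat \<bar>j\<bar> = m \<and> c j \<noteq> c' j) \<le> nat \<bar>j\<bar>"
    by (rule Least_le) (use assms in auto)
  also have "\<dots> \<le> m" using assms by auto
  finally have le: "(LEAST m. \<exists>j. nat \<bar>j\<bar> = m \<and> c j \<noteq> c' j) \<le> m" .
  have "(1/2::real)^m \<le> (1/2)^(LEAST m. \<exists>j. nat \<bar>j\<bar> = m \<and> c j \<noteq> c' j)"
    by (rule power_decreasing[OF le]) auto
  then show ?thesis using ne unfolding cdist_def by simp
qed

lemma cdist_small: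
  assumes "cdist c c' \<ge> \<epsilon>" "\<epsilon> > 0" "(1/2::real)^M < \<epsilon>"
  shows "\<exists>j. \<bar>j\<bar> \<le> int M \<and> c j \<noteq> c' j"
proof -
  have ne: "c \<noteq> c'" using assms unfolding cdist_def by auto
  then obtain j0 where j0: "c j0 \<noteq> c' j0" by auto
  define L where "L = (LEAST m. \<exists>j. nat \<bar>j\<bar> = m \<and> c j \<noteq> c' j)"
  have ex: "\<exists>j. nat \<bar>j\<bar> = L \<and> c j \<noteq> c' j"
    unfolding L_def by (rule LeastI[of _ "nat \<bar>j0\<bar>"]) (use j0 in auto)
  have "(1/2::real)^L \<ge> \<epsilon>" using assms ne unfolding cdist_def L_def by simp
  then have "(1/2::real)^M < (1/2)^L" using assms by linarith
  then have "L < M" by (simp add: power_strict_decreasing_iff)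
  with ex show ?thesis by auto
qed

definition gexp :: "((int \<Rightarrow> nat \<Rightarrow> int) \<Rightarrow> bool) \<Rightarrow> ((int \<Rightarrow> nat \<Rightarrow> int) \<Rightarrow> (int \<Rightarrow> nat \<Rightarrow> int)) \<Rightarrow> bool" where
  "gexp V F \<longleftrightarrow> (\<exists>\<epsilon>>0. \<forall>c c'. V c \<and> V c' \<and> c \<noteq> c' \<longrightarrow>
      (\<exists>t::nat. cdist ((F ^^ t) c) ((F ^^ t) c') \<ge> \<epsilon>))"

lemma transfer:
  fixes F G \<Phi> \<Psi> :: "(int \<Rightarrow> nat \<Rightarrow> int) \<Rightarrow> (int \<Rightarrow> nat \<Rightarrow> int)"
  assumes FV: "\<And>x. V x \<Longrightarrow> V (F x)" and GV: "\<And>x. V x \<Longrightarrow> V (G x)"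
    and \<Phi>V: "\<And>x. V x \<Longrightarrow> V (\<Phi> x)" and \<Psi>V: "\<And>x. V x \<Longrightarrow> V (\<Psi> x)"
    and \<Psi>\<Phi>: "\<And>x. V x \<Longrightarrow> \<Psi> (\<Phi> x) = x" and \<Phi>\<Psi>: "\<And>x. V x \<Longrightarrow> \<Phi> (\<Psi> x) = x"
    and comm: "\<And>x. V x \<Longrightarrow> \<Phi> (F x) = G (\<Phi> x)"
    and loc: "\<And>m y y'. agree (m + R) y y' \<Longrightarrow> agree m (\<Psi> y) (\<Psi> y')"
    and ex: "gexp V F"
  shows "gexp V G"
proof -
  have it: "V ((F^^t) x) \<and> \<Phi> ((F^^t) x) = (G^^t) (\<Phi> x)" if "V x" for t x
    using that by (induction t) (auto simp: FV comm)
  obtain \<epsilon> where e: "\<epsilon> > 0" and H: "\<And>c c'. V c \<Longrightarrow> V c' \<Longrightarrow> c \<noteq> c' \<Longrightarrow>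
      \<exists>t::nat. cdist ((F ^^ t) c) ((F ^^ t) c') \<ge> \<epsilon>"
    using ex unfolding gexp_def by blast
  obtain M where M: "(1/2::real)^M < \<epsilon>" using real_arch_pow_inv[OF e, of "1/2"] by auto
  show ?thesis unfolding gexp_def
  proof (intro exI[of _ "(1/2::real)^(M+R)"] conjI allI impI)
    show "(0::real) < (1/2)^(M+R)" by simp
    fix d d' assume dd: "V d \<and> V d' \<and> d \<noteq> d'"
    define c where "c = \<Psi> d"
    define c' where "c' = \<Psi> d'"
    have Vc: "V c" "V c'" using dd \<Psi>V c_def c'_def by auto
    have "c \<noteq> c'" using dd \<Phi>\<Psi> c_def c'_def by metis
    then obtain t where t: "cdist ((F ^^ t) c) ((F ^^ t) c') \<ge> \<epsilon>" using H Vc by blast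
    then obtain j where j: "\<bar>j\<bar> \<le> int M" "(F ^^ t) c j \<noteq> (F ^^ t) c' j"
      using cdist_small[OF t e M] by blast
    have "(F ^^ t) c = \<Psi> ((G^^t) d)"
      using it[OF Vc(1), of t] \<Psi>\<Phi>[of "(F^^t) c"] \<Phi>\<Psi>[of d] dd c_def by metis
    moreover have "(F ^^ t) c' = \<Psi> ((G^^t) d')"
      using it[OF Vc(2), of t] \<Psi>\<Phi>[of "(F^^t) c'"] \<Phi>\<Psi>[of d'] dd c'_def by metis
    ultimately have "\<not> agree M (\<Psi> ((G^^t) d)) (\<Psi> ((G^^t) d'))"
      using j unfolding agree_def by auto
    then have "\<not> agree (M+R) ((G^^t) d) ((G^^t) d')" using loc by blast
    then obtain j' where "\<bar>j'\<bar> \<le> int (M+R)" "(G^^t) d j' \<noteq> (G^^t) d' j'"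
      unfolding agree_def by blast
    then show "\<exists>t. (1/2)^(M+R) \<le> cdist ((G ^^ t) d) ((G ^^ t) d')"
      using cdist_ge by blast
  qed
qed

lemma lca_config: "p > 0 \<Longrightarrow> config p n (lca p n M c)"
  unfolding config_def lca_def by auto

lemma pos_expansive_gexp: "pos_expansive p n M = gexp (config p n) (lca p n M)"
  unfolding pos_expansive_def gexp_def by simp


definition Aop :: "laurent \<Rightarrow> (int \<Rightarrow> int) \<Rightarrow> int \<Rightarrow> int" where
  "Aop a u i = (\<Sum>j\<in>{j. a (- j) \<noteq> 0}. a (- j) * u (i + j))"

locale lsetup =
  fixes p :: int and n :: nat and \<alpha> :: "nat \<Rightarrow> laurent"
  assumes p1: "p > 1" and n1: "n > 1" and lp: "\<forall>i<n. laurent_poly p (\<alpha> i)"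
begin

definition "CC = companion p n (\<lambda>i. lp_neg p (\<alpha> i))"
definition "F = lca p n CC"
definition "G = lca p n (\<lambda>k l. CC l k)"

lemma negneg: "k < n \<Longrightarrow> lp_neg p (lp_neg p (\<alpha> k)) = \<alpha> k"
proof
  fix m assume "k < n"
  then have "0 \<le> \<alpha> k m" "\<alpha> k m < p" using lp unfolding laurent_poly_def by auto
  then show "lp_neg p (lp_neg p (\<alpha> k)) m = \<alpha> k m"
    unfolding lp_neg_def by (simp add: mod_minus_eq)
qed

lemma one_sum: "(\<Sum>j\<in>{j. lp_one (- j) \<noteq> 0}. lp_one (- j) * u j) = u 0"
proof -
  have "{j. lp_one (- j) \<noteq> 0} = {0}" unfolding lp_one_def by auto
  then show ?thesis unfolding lp_one_def by simp
qed

lemma zero_sum: "(\<Sum>j\<in>{j. lp_zero (- j) \<noteq> 0}. lp_zero (- j) * u j) = 0"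
  unfolding lp_zero_def by simp

lemma F_eq: "F x i k = (if k < n then ((if 0 < k then x i (k-1) else 0)
     + Aop (\<alpha> k) (\<lambda>i. x i (n-1)) i) mod p else 0)"
proof (cases "k < n")
  case True
  define T where "T l = (\<Sum>j\<in>{j. CC k l (- j) \<noteq> 0}. CC k l (- j) * x (i + j) l)" for l
  have Tn: "T (n-1) = Aop (\<alpha> k) (\<lambda>i. x i (n-1)) i"
    unfolding T_def Aop_def CC_def companion_def using negneg[OF True] by simp
  have To: "T l = (if k = l + 1 then x i l else 0)" if "l < n - 1" for l
  proof (cases "k = l + 1")
    case True
    then show ?thesis unfolding T_def CC_def companion_def using that one_sum[of "\<lambda>j. x (i+j) l"] by simp
  next
    case False
    then show ?thesis unfolding T_def CC_def companion_def using that zero_sum by simp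
  qed
  have "(\<Sum>l<n. T l) = (\<Sum>l<n-1. T l) + T (n-1)"
    using n1 by (metis Suc_diff_1 less_trans sum.lessThan_Suc zero_less_one)
  also have "(\<Sum>l<n-1. T l) = (\<Sum>l<n-1. if k = l + 1 then x i l else 0)"
    using To by simp
  also have "\<dots> = (if 0 < k then x i (k-1) else 0)"
  proof (cases "0 < k")
    case True
    have "(\<Sum>l<n-1. if k = l + 1 then x i l else 0) = (\<Sum>l<n-1. if l = k - 1 then x i l else 0)"
      by (rule sum.cong) (use True in auto)
    also have "\<dots> = x i (k-1)" using True \<open>k < n\<close> by (simp add: sum.delta)
    finally show ?thesis using True by simp
  qed simp
  finally have "(\<Sum>l<n. T l) = (if 0 < k then x i (k-1) else 0) + Aop (\<alpha> k) (\<lambda>i. x i (n-1)) i"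
    using Tn by simp
  then show ?thesis using True unfolding F_def lca_def T_def by simp
next
  case False
  then show ?thesis unfolding F_def lca_def by simp
qed

lemma G_low: "k < n - 1 \<Longrightarrow> G y i k = y i (k+1) mod p"
proof -
  assume k: "k < n - 1"
  define T where "T l = (\<Sum>j\<in>{j. CC l k (- j) \<noteq> 0}. CC l k (- j) * y (i + j) l)" for l
  have "T l = (if l = k + 1 then y i l else 0)" for l
    using k one_sum[of "\<lambda>j. y (i+j) l"] zero_sum[of "\<lambda>j. y (i+j) l"]
    unfolding T_def CC_def companion_def by auto
  then have "(\<Sum>l<n. T l) = y i (k+1)" using k by (simp add: sum.delta)
  then show ?thesis using k unfolding G_def lca_def T_def by simp
qed

lemma G_top: "G y i (n-1) = (\<Sum>l<n. Aop (\<alpha> l) (\<lambda>i. y i l) i) mod p"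
proof -
  have "(\<Sum>j\<in>{j. CC l (n-1) (- j) \<noteq> 0}. CC l (n-1) (- j) * y (i + j) l) = Aop (\<alpha> l) (\<lambda>i. y i l) i"
    if "l < n" for l
    using negneg[OF that] unfolding CC_def companion_def Aop_def by simp
  then show ?thesis using n1 unfolding G_def lca_def by simp
qed

lemma G_high: "n \<le> k \<Longrightarrow> G y i k = 0"
  unfolding G_def lca_def by simp

lemma FV: "config p n x \<Longrightarrow> config p n (F x)"
  using lca_config p1 unfolding F_def by auto
lemma GV: "config p n x \<Longrightarrow> config p n (G x)"
  using lca_config p1 unfolding G_def by auto
lemma FitV: "config p n x \<Longrightarrow> config p n ((F^^K) x)"
  by (induction K) (auto simp: FV)

lemma cfg_mod: "config p n x \<Longrightarrow> k < n \<Longrightarrow> x i k mod p = x i k"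
  unfolding config_def by auto

end
context lsetup begin

definition "zc x q = (\<lambda>i. (F^^q) x i (n-1))"

lemma KF:
  assumes "config p n x" "j < n"
  shows "(F^^K) x i j = ((if K \<le> j then x i (j-K) else 0)
     + (\<Sum>q\<in>{q. q<K \<and> K \<le> j+1+q}. Aop (\<alpha> (j+1+q-K)) (zc x q) i)) mod p"
  using assms(2)
proof (induction K arbitrary: j)
  case 0
  then show ?case using cfg_mod[OF assms(1)] by simp
next
  case (Suc K)
  have "(F^^Suc K) x i j = F ((F^^K) x) i j" by simp
  also have "\<dots> = ((if 0 < j then (F^^K) x i (j-1) else 0) + Aop (\<alpha> j) (zc x K) i) mod p"
    using Suc.prems unfolding F_eq zc_def by simp
  also have "\<dots> = ((if Suc K \<le> j then x i (j - Suc K) else 0)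
     + (\<Sum>q\<in>{q. q<Suc K \<and> Suc K \<le> j+1+q}. Aop (\<alpha> (j+1+q-Suc K)) (zc x q) i)) mod p"
  proof (cases "0 < j")
    case True
    have IH: "(F^^K) x i (j-1) = ((if K \<le> j-1 then x i (j-1-K) else 0)
     + (\<Sum>q\<in>{q. q<K \<and> K \<le> j-1+1+q}. Aop (\<alpha> (j-1+1+q-K)) (zc x q) i)) mod p"
      using Suc.IH Suc.prems by simp
    have set: "{q. q<Suc K \<and> Suc K \<le> j+1+q} = insert K {q. q<K \<and> K \<le> j-1+1+q}"
      using True by auto
    have fin: "finite {q. q<K \<and> K \<le> j-1+1+q}" by simp
    have "(\<Sum>q\<in>{q. q<Suc K \<and> Suc K \<le> j+1+q}. Aop (\<alpha> (j+1+q-Suc K)) (zc x q) i)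
        = Aop (\<alpha> j) (zc x K) i + (\<Sum>q\<in>{q. q<K \<and> K \<le> j-1+1+q}. Aop (\<alpha> (j-1+1+q-K)) (zc x q) i)"
      unfolding set using True by (simp add: sum.insert[OF fin])
    moreover have "(if K \<le> j-1 then x i (j-1-K) else 0) = (if Suc K \<le> j then x i (j - Suc K) else 0)"
      using True by auto
    ultimately show ?thesis using True unfolding IH by (simp add: mod_add_left_eq mod_add_right_eq add_ac)
  next
    case False
    then have j0: "j = 0" by simp
    have set: "{q. q<Suc K \<and> Suc K \<le> j+1+q} = {K}" using j0 by auto
    show ?thesis unfolding set using j0 by simp
  qed
  finally show ?case .
qed

lemma CH: "config p n x \<Longrightarrow> (F^^n) x i (n-1) = (\<Sum>l<n. Aop (\<alpha> l) (zc x l) i) mod p"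
proof -
  assume x: "config p n x"
  have set: "{q. q<n \<and> n \<le> n-1+1+q} = {..<n}" using n1 by auto
  have "(F^^n) x i (n-1) = ((if n \<le> n-1 then x i (n-1-n) else 0)
     + (\<Sum>q\<in>{q. q<n \<and> n \<le> n-1+1+q}. Aop (\<alpha> (n-1+1+q-n)) (zc x q) i)) mod p"
    using KF[OF x, of "n-1" n] n1 by simp
  also have "\<dots> = (\<Sum>l<n. Aop (\<alpha> l) (zc x l) i) mod p"
    unfolding set using n1 by simp
  finally show ?thesis .
qed

definition "\<Phi> x = (\<lambda>i k. if k < n then (F^^k) x i (n-1) else 0)"
definition "\<Psi> z = (\<lambda>i k. if k < n then (z i (n-1-k)
    - (\<Sum>q<n-1-k. Aop (\<alpha> (k+1+q)) (\<lambda>i. z i q) i)) mod p else 0)"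

lemma \<Phi>V: "config p n x \<Longrightarrow> config p n (\<Phi> x)"
  using FitV n1 unfolding config_def \<Phi>_def by auto

lemma \<Psi>V: "config p n x \<Longrightarrow> config p n (\<Psi> x)"
  using p1 unfolding config_def \<Psi>_def by auto

lemma comm: "config p n x \<Longrightarrow> \<Phi> (F x) = G (\<Phi> x)"
proof (intro ext)
  fix i k assume x: "config p n x"
  consider "k < n - 1" | "k = n - 1" | "n \<le> k" by linarith
  then show "\<Phi> (F x) i k = G (\<Phi> x) i k"
  proof cases
    case 1
    have L: "\<Phi> (F x) i k = (F^^Suc k) x i (n-1)" using 1 unfolding \<Phi>_def by (simp add: funpow_swap1)
    have cf: "config p n ((F^^Suc k) x)" using FitV[OF x] .
    have "G (\<Phi> x) i k = \<Phi> x i (Suc k) mod p" using 1 G_low by simp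
    also have "\<dots> = (F^^Suc k) x i (n-1) mod p" using 1 unfolding \<Phi>_def by simp
    also have "\<dots> = (F^^Suc k) x i (n-1)" using cfg_mod[OF cf, of "n-1"] n1 by simp
    finally have "G (\<Phi> x) i k = (F^^Suc k) x i (n-1)" .
    with L show ?thesis by simp
  next
    case 2
    have "\<Phi> (F x) i k = (F^^n) x i (n-1)" using 2 n1 unfolding \<Phi>_def
      by (metis Suc_diff_1 diff_less funpow_Suc_right less_trans o_apply zero_less_one)
    also have "\<dots> = (\<Sum>l<n. Aop (\<alpha> l) (zc x l) i) mod p" using CH[OF x] .
    also have "\<dots> = G (\<Phi> x) i k" unfolding 2 G_top
      by (rule arg_cong[where f="\<lambda>s. s mod p"], rule sum.cong) (auto simp: \<Phi>_def zc_def)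
    finally show ?thesis .
  next
    case 3
    then show ?thesis using G_high unfolding \<Phi>_def by simp
  qed
qed

lemma \<Psi>\<Phi>: "config p n x \<Longrightarrow> \<Psi> (\<Phi> x) = x"
proof (intro ext)
  fix i k assume x: "config p n x"
  show "\<Psi> (\<Phi> x) i k = x i k"
  proof (cases "k < n")
    case True
    define S where "S = (\<Sum>q<n-1-k. Aop (\<alpha> (k+1+q)) (zc x q) i)"
    have set: "{q. q<n-1-k \<and> n-1-k \<le> n-1+1+q} = {..<n-1-k}" by auto
    have "(F^^(n-1-k)) x i (n-1) = ((if n-1-k \<le> n-1 then x i (n-1-(n-1-k)) else 0)
     + (\<Sum>q\<in>{q. q<n-1-k \<and> n-1-k \<le> n-1+1+q}. Aop (\<alpha> (n-1+1+q-(n-1-k))) (zc x q) i)) mod p"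
      using KF[OF x, of "n-1"] n1 by simp
    also have "\<dots> = (x i k + S) mod p" unfolding set S_def
      using True by (intro arg_cong[where f="\<lambda>s. s mod p"]) (auto intro!: sum.cong simp: Suc_diff_Suc add_ac)
    finally have e: "(F^^(n-1-k)) x i (n-1) = (x i k + S) mod p" .
    have zz: "(\<lambda>i. \<Phi> x i q) = zc x q" if "q < n" for q
      using that unfolding \<Phi>_def zc_def by auto
    have "\<Psi> (\<Phi> x) i k = (\<Phi> x i (n-1-k) - (\<Sum>q<n-1-k. Aop (\<alpha> (k+1+q)) (\<lambda>i. \<Phi> x i q) i)) mod p"
      using True unfolding \<Psi>_def by simp
    also have "(\<Sum>q<n-1-k. Aop (\<alpha> (k+1+q)) (\<lambda>i. \<Phi> x i q) i) = S"
      unfolding S_def by (rule sum.cong[OF refl], subst zz) auto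
    also have "\<Phi> x i (n-1-k) = (F^^(n-1-k)) x i (n-1)" unfolding \<Phi>_def using True n1 by simp
    also have "((F^^(n-1-k)) x i (n-1) - S) mod p = x i k" unfolding e using cfg_mod[OF x True] by (simp add: mod_diff_left_eq)
    finally show ?thesis .
  next
    case False
    then show ?thesis using x unfolding \<Psi>_def config_def by simp
  qed
qed

lemma \<Phi>\<Psi>: "config p n z \<Longrightarrow> \<Phi> (\<Psi> z) = z"
proof -
  assume z: "config p n z"
  define x where "x = \<Psi> z"
  have x: "config p n x" using \<Psi>V[OF z] x_def by simp
  have main: "\<forall>i. (F^^K) x i (n-1) = z i K" if "K < n" for K
    using that
  proof (induction K rule: less_induct)
    case (less K)
    show ?case
    proof
      fix i
      have zq: "zc x q = (\<lambda>i. z i q)" if "q < K" for q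
        using less.IH[of q] that less.prems unfolding zc_def by auto
      define S where "S = (\<Sum>q<K. Aop (\<alpha> (n-1-K+1+q)) (\<lambda>i. z i q) i)"
      have set: "{q. q<K \<and> K \<le> n-1+1+q} = {..<K}" using less.prems by auto
      have ar: "n-1+1+q-K = n-1-K+1+q" for q using less.prems n1 by simp
      have "(F^^K) x i (n-1) = ((if K \<le> n-1 then x i (n-1-K) else 0)
         + (\<Sum>q\<in>{q. q<K \<and> K \<le> n-1+1+q}. Aop (\<alpha> (n-1+1+q-K)) (zc x q) i)) mod p"
        using KF[OF x, of "n-1"] n1 by simp
      also have "\<dots> = (x i (n-1-K) + S) mod p" unfolding set S_def ar
        using less.prems n1 by (intro arg_cong[where f="\<lambda>s. s mod p"]) (auto intro!: sum.cong simp: zq)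
      also have "x i (n-1-K) = (z i K - S) mod p"
        unfolding x_def \<Psi>_def S_def using less.prems
        by (simp add: Suc_diff_Suc)
      also have "((z i K - S) mod p + S) mod p = z i K"
        using cfg_mod[OF z less.prems] by (simp add: mod_add_left_eq)
      finally show "(F^^K) x i (n-1) = z i K" .
    qed
  qed
  show "\<Phi> (\<Psi> z) = z"
  proof (intro ext)
    fix i k
    show "\<Phi> (\<Psi> z) i k = z i k"
      using main[of k] z unfolding \<Phi>_def x_def[symmetric] config_def by auto
  qed
qed

end
context lsetup begin

lemma radius: "\<exists>r::nat. \<forall>l<n. \<forall>m. \<alpha> l m \<noteq> 0 \<longrightarrow> \<bar>m\<bar> \<le> int r"
proof -
  define S where "S = (\<Union>l<n. {m. \<alpha> l m \<noteq> 0})"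
  have "finite S" unfolding S_def using lp unfolding laurent_poly_def by auto
  define r where "r = nat (Max (insert 0 (abs ` S)))"
  have "\<forall>m\<in>S. \<bar>m\<bar> \<le> int r"
  proof
    fix m assume "m \<in> S"
    then have "\<bar>m\<bar> \<le> Max (insert 0 (abs ` S))" using \<open>finite S\<close> by (intro Max_ge) auto
    then show "\<bar>m\<bar> \<le> int r" unfolding r_def by linarith
  qed
  then show ?thesis unfolding S_def by blast
qed

lemma Aop_local:
  assumes r: "\<forall>l<n. \<forall>m. \<alpha> l m \<noteq> 0 \<longrightarrow> \<bar>m\<bar> \<le> int r"
    and u: "\<forall>j. \<bar>j\<bar> \<le> int m + int r \<longrightarrow> u j = u' j" and i: "\<bar>i\<bar> \<le> int m" and l: "l < n"
  shows "Aop (\<alpha> l) u i = Aop (\<alpha> l) u' i"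
  unfolding Aop_def
proof (rule sum.cong[OF refl])
  fix j assume "j \<in> {j. \<alpha> l (- j) \<noteq> 0}"
  then have "\<bar>j\<bar> \<le> int r" using r l by fastforce
  then have "u (i+j) = u' (i+j)" using u i by auto
  then show "\<alpha> l (- j) * u (i + j) = \<alpha> l (- j) * u' (i + j)" by simp
qed

context
  fixes r :: nat
  assumes r: "\<forall>l<n. \<forall>m. \<alpha> l m \<noteq> 0 \<longrightarrow> \<bar>m\<bar> \<le> int r"
begin

lemma F_local: "agree (m + r) x x' \<Longrightarrow> agree m (F x) (F x')"
  unfolding agree_def
proof (intro allI impI ext)
  fix i k assume a: "\<forall>j. \<bar>j\<bar> \<le> int (m + r) \<longrightarrow> x j = x' j" and i: "\<bar>i\<bar> \<le> int m"
  have xi: "x i = x' i" using a i by auto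
  have "Aop (\<alpha> k) (\<lambda>i. x i (n-1)) i = Aop (\<alpha> k) (\<lambda>i. x' i (n-1)) i" if "k < n"
    by (rule Aop_local[OF r _ i that]) (use a in auto)
  then show "F x i k = F x' i k" unfolding F_eq xi by simp
qed

lemma Fit_local: "agree (m + K*r) x x' \<Longrightarrow> agree m ((F^^K) x) ((F^^K) x')"
proof (induction K arbitrary: m x x')
  case 0
  then show ?case by simp
next
  case (Suc K)
  have "agree ((m + K*r) + r) x x'" using Suc.prems by (simp add: add_ac)
  then have "agree (m + K*r) (F x) (F x')" by (rule F_local)
  then have "agree m ((F^^K) (F x)) ((F^^K) (F x'))" by (rule Suc.IH)
  then show ?case by (simp add: funpow_swap1)
qed

lemma \<Phi>_local: "agree (m + n*r) x x' \<Longrightarrow> agree m (\<Phi> x) (\<Phi> x')"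
proof -
  assume a: "agree (m + n*r) x x'"
  have "agree m ((F^^k) x) ((F^^k) x')" if "k < n" for k
    by (rule Fit_local, rule agree_mono[OF a]) (use that in simp)
  then show ?thesis unfolding agree_def \<Phi>_def by auto
qed

lemma \<Psi>_local: "agree (m + r) z z' \<Longrightarrow> agree m (\<Psi> z) (\<Psi> z')"
  unfolding agree_def
proof (intro allI impI ext)
  fix i k assume a: "\<forall>j. \<bar>j\<bar> \<le> int (m + r) \<longrightarrow> z j = z' j" and i: "\<bar>i\<bar> \<le> int m"
  have zi: "z i = z' i" using a i by auto
  have "Aop (\<alpha> (k+1+q)) (\<lambda>i. z i q) i = Aop (\<alpha> (k+1+q)) (\<lambda>i. z' i q) i" if "q < n-1-k" for q
    by (rule Aop_local[OF r _ i]) (use a that in auto)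
  then show "\<Psi> z i k = \<Psi> z' i k" unfolding \<Psi>_def zi by simp
qed

end

lemma main: "gexp (config p n) G \<longleftrightarrow> gexp (config p n) F"
proof -
  obtain r where r: "\<forall>l<n. \<forall>m. \<alpha> l m \<noteq> 0 \<longrightarrow> \<bar>m\<bar> \<le> int r" using radius by blast
  have comm2: "\<Psi> (G y) = F (\<Psi> y)" if "config p n y" for y
  proof -
    have "\<Psi> (G y) = \<Psi> (G (\<Phi> (\<Psi> y)))" using \<Phi>\<Psi>[OF that] by simp
    also have "\<dots> = \<Psi> (\<Phi> (F (\<Psi> y)))" using comm[OF \<Psi>V[OF that]] by simp
    also have "\<dots> = F (\<Psi> y)" using \<Psi>\<Phi>[OF FV[OF \<Psi>V[OF that]]] .
    finally show ?thesis .
  qed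
  show ?thesis
  proof
    assume H: "gexp (config p n) G"
    show "gexp (config p n) F"
      by (rule transfer[of "config p n" G F \<Psi> \<Phi> "n*r", OF _ _ _ _ _ _ _ _ H])
        (auto simp: GV FV \<Phi>V \<Psi>V \<Psi>\<Phi> \<Phi>\<Psi> comm2 \<Phi>_local[OF r])
  next
    assume H: "gexp (config p n) F"
    show "gexp (config p n) G"
      by (rule transfer[of "config p n" F G \<Phi> \<Psi> r, OF _ _ _ _ _ _ _ _ H])
        (auto simp: GV FV \<Phi>V \<Psi>V \<Psi>\<Phi> \<Phi>\<Psi> comm \<Psi>_local[OF r])
  qed
qed

end

theorem lemma11:
  fixes p :: int and n :: nat and \<alpha> :: "nat \<Rightarrow> laurent"
  assumes "prime p" and "n > 1"
    and "\<forall>i<n. laurent_poly p (\<alpha> i)"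
  shows "pos_expansive p n (\<lambda>k l. companion p n (\<lambda>i. lp_neg p (\<alpha> i)) l k)
     \<longleftrightarrow> pos_expansive p n (companion p n (\<lambda>i. lp_neg p (\<alpha> i)))"
proof -
  interpret lsetup p n \<alpha>
    using assms prime_gt_1_int by unfold_locales auto
  show ?thesis using main unfolding pos_expansive_gexp G_def F_def CC_def .
qed

end
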